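(* Let $\lambda$ be a partition with $d(\lambda)\ge3$, let $\ell=d(\lambda)-3$ and $A=\mathcal{L}(\lambda)$. Then $\mathbb{SG}(A)=\mathbb{SG}(A[\ell,\ell])$.
   Context: A partition is a finite non-increasing sequence $\lambda=(\lambda_1,\dots,\lambda_r)$ of positive integers; $()$ is the empty partition. Durfee length: $d(\lambda)=\max\{k:\lambda_k\ge k\}$. For non-negative $i,j$, $\lambda[i,j]$ is $(\lambda_{i+1}-j,\dots,\lambda_r-j)$ with all non-positive entries removed. LCTR: positions $\mathcal{L}(\mu)$; if $\mu\neq()$ the two moves go to $\mathcal{L}(\mu[1,0])$ and $\mathcal{L}(\mu[0,1])$; $\mathcal{L}(())$ is terminal. For $A=\mathcal{L}(\lambda)$, $A[i,j]=\mathcal{L}(\lambda[i,j])$. Normal play; $\mathbb{SG}(A)=\operatorname{mex}\{\mathbb{SG}(B):A\to B\}$. *)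

theory Defs
  imports Main
begin

definition is_partition :: "nat list \<Rightarrow> bool" where
  "is_partition l \<longleftrightarrow> sorted_wrt (\<ge>) l \<and> (\<forall>x\<in>set l. 0 < x)"

definition durfee :: "nat list \<Rightarrow> nat" where
  "durfee l = Max ({0} \<union> {k. 1 \<le> k \<and> k \<le> length l \<and> k \<le> l ! (k - 1)})"

text \<open>lambda[i,j]: drop the first i parts, subtract j from each, remove non-positive entries.\<close>
definition shift :: "nat list \<Rightarrow> nat \<Rightarrow> nat \<Rightarrow> nat list" where
  "shift l i j = filter (\<lambda>x. 0 < x) (map (\<lambda>x. x - j) (drop i l))"

definition mex :: "nat set \<Rightarrow> nat" where
  "mex S = (LEAST n. n \<notin> S)"

lemma shift_measure:
  "l \<noteq> [] \<Longrightarrow> sum_list (shift l 1 0) + length (shift l 1 0) < sum_list l + length l"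
  "l \<noteq> [] \<Longrightarrow> sum_list (shift l 0 1) + length (shift l 0 1) < sum_list l + length l"
proof -
  have gen: "sum_list (filter (\<lambda>x. 0 < x) (map (\<lambda>x. x - j) xs)) + length (filter (\<lambda>x. 0 < x) (map (\<lambda>x. x - j) xs)) \<le> sum_list xs + length xs" for xs :: "nat list" and j
    by (induction xs) auto
  have gen1: "xs \<noteq> [] \<Longrightarrow> sum_list (filter (\<lambda>x. 0 < x) (map (\<lambda>x. x - 1) xs)) + length (filter (\<lambda>x. 0 < x) (map (\<lambda>x. x - 1) xs)) < sum_list xs + length xs" for xs :: "nat list"
  proof (induction xs)
    case (Cons a xs)
    then show ?case using gen[of 1 xs] by (cases xs) auto
  qed simp
  show "l \<noteq> [] \<Longrightarrow> sum_list (shift l 1 0) + length (shift l 1 0) < sum_list l + length l"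
    using gen[of 0 "tl l"] by (cases l) (auto simp: shift_def)
  show "l \<noteq> [] \<Longrightarrow> sum_list (shift l 0 1) + length (shift l 0 1) < sum_list l + length l"
    using gen1[of l] by (simp add: shift_def)
qed

text \<open>Sprague-Grundy value of the LCTR position L(mu): the two moves go to mu[1,0] and mu[0,1];
  L(()) is terminal (no moves, value mex {} = 0).\<close>
function sg :: "nat list \<Rightarrow> nat" where
  "sg l = (if l = [] then mex {} else mex {sg (shift l 1 0), sg (shift l 0 1)})"
  by auto
termination
  by (relation "measure (\<lambda>l. sum_list l + length l)") (use shift_measure in \<open>auto simp del: One_nat_def simp: One_nat_def[symmetric]\<close>)

declare sg.simps[simp del]

end

theory Submission imports Defs begin

definition m2 :: "nat \<Rightarrow> nat \<Rightarrow> nat" where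
  "m2 a b = (if a \<noteq> 0 \<and> b \<noteq> 0 then 0 else if a \<noteq> 1 \<and> b \<noteq> 1 then 1 else 2)"

lemma mex2: "mex {a, b} = m2 a b"
  unfolding mex_def m2_def
  by (rule Least_equality) auto

lemma mex0: "mex {} = 0"
  unfolding mex_def by simp

definition SL :: "(nat \<times> nat \<times> nat \<times> nat \<times> nat) list" where
  "SL = [(0,0,0,0,0), (0,1,0,0,2), (0,1,0,1,4), (0,1,0,2,4), (0,1,2,0,3), (0,1,2,1,4), (0,2,0,0,2), (0,2,0,2,4), (0,2,1,0,3), (1,0,0,0,1), (1,0,1,0,3), (1,0,1,2,4), (1,0,2,0,3), (1,0,2,1,4), (1,2,0,0,2), (1,2,0,1,4), (1,2,0,2,4), (1,2,1,0,3), (2,0,0,0,1), (2,0,1,0,3), (2,0,1,2,4), (2,0,2,0,3), (2,0,2,1,4), (2,1,0,0,2), (2,1,0,1,4), (2,1,2,1,4)]"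

definition SS where "SS = set SL"

fun stepv :: "nat \<Rightarrow> nat \<Rightarrow> nat \<Rightarrow> nat \<Rightarrow> nat \<Rightarrow> nat \<times> nat \<times> nat \<times> nat \<times> nat" where
  "stepv w0 w1 w2 w3 r = (let v3 = (if 3 < r then m2 0 w3 else 0);
      v2 = (if 2 < r then m2 v3 w2 else 0);
      v1 = (if 1 < r then m2 v2 w1 else 0);
      v0 = (if 0 < r then m2 v1 w0 else 0) in (v0, v1, v2, v3, r))"

definition okc :: "nat \<times> nat \<times> nat \<times> nat \<times> nat \<Rightarrow> bool" where
  "okc x = (case x of (w0,w1,w2,w3,h) \<Rightarrow> (\<forall>r\<in>set [h,h+1,h+2,h+3,h+4]. 1 \<le> r \<and> r \<le> 4 \<longrightarrow> stepv w0 w1 w2 w3 r \<in> set SL))"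

lemma okc_all: "list_all okc SL"
  by code_simp

lemma SS_closed:
  assumes "(w0, w1, w2, w3, h) \<in> SS" "h \<le> r" "1 \<le> r" "r \<le> 4"
  shows "stepv w0 w1 w2 w3 r \<in> SS"
proof -
  have "okc (w0, w1, w2, w3, h)" using okc_all assms(1) unfolding SS_def list_all_iff by blast
  moreover have "r \<in> set [h,h+1,h+2,h+3,h+4]" using assms(2,4) by auto
  ultimately show ?thesis using assms(3,4) unfolding okc_def SS_def by (simp only: prod.case)
qed

fun rowf :: "nat \<times> nat \<times> nat \<times> nat \<Rightarrow> nat \<Rightarrow> nat \<times> nat \<times> nat \<times> nat" where
  "rowf (x0, x1, x2, x3) a =
     (m2 x0 (m2 x1 (m2 x2 (m2 x3 a))), m2 x1 (m2 x2 (m2 x3 a)), m2 x2 (m2 x3 a), m2 x3 a)"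

fun core :: "nat \<Rightarrow> nat \<Rightarrow> nat \<Rightarrow> nat \<Rightarrow> nat \<Rightarrow> nat \<Rightarrow> nat \<Rightarrow> nat \<Rightarrow> nat \<times> nat" where
  "core a0 a1 a2 a3 b0 b1 b2 b3 =
    (fst (rowf (rowf (rowf (rowf (b0, b1, b2, b3) a3) a2) a1) a0),
     fst (snd (rowf (rowf (rowf (b0, b1, b2, b3) a3) a2) a1)))"

definition okp :: "nat \<times> nat \<times> nat \<times> nat \<times> nat \<Rightarrow> nat \<times> nat \<times> nat \<times> nat \<times> nat \<Rightarrow> bool" where
  "okp x y = (case x of (a0,a1,a2,a3,ha) \<Rightarrow> case y of (b0,b1,b2,b3,hb) \<Rightarrow>
     fst (core a0 a1 a2 a3 b0 b1 b2 b3) = snd (core a0 a1 a2 a3 b0 b1 b2 b3))"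

definition okrow where "okrow x = list_all (okp x) SL"
lemma okrow_0: "okrow (0,0,0,0,0)"
  unfolding okrow_def by code_simp
lemma okrow_1: "okrow (0,1,0,0,2)"
  unfolding okrow_def by code_simp
lemma okrow_2: "okrow (0,1,0,1,4)"
  unfolding okrow_def by code_simp
lemma okrow_3: "okrow (0,1,0,2,4)"
  unfolding okrow_def by code_simp
lemma okrow_4: "okrow (0,1,2,0,3)"
  unfolding okrow_def by code_simp
lemma okrow_5: "okrow (0,1,2,1,4)"
  unfolding okrow_def by code_simp
lemma okrow_6: "okrow (0,2,0,0,2)"
  unfolding okrow_def by code_simp
lemma okrow_7: "okrow (0,2,0,2,4)"
  unfolding okrow_def by code_simp
lemma okrow_8: "okrow (0,2,1,0,3)"
  unfolding okrow_def by code_simp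
lemma okrow_9: "okrow (1,0,0,0,1)"
  unfolding okrow_def by code_simp
lemma okrow_10: "okrow (1,0,1,0,3)"
  unfolding okrow_def by code_simp
lemma okrow_11: "okrow (1,0,1,2,4)"
  unfolding okrow_def by code_simp
lemma okrow_12: "okrow (1,0,2,0,3)"
  unfolding okrow_def by code_simp
lemma okrow_13: "okrow (1,0,2,1,4)"
  unfolding okrow_def by code_simp
lemma okrow_14: "okrow (1,2,0,0,2)"
  unfolding okrow_def by code_simp
lemma okrow_15: "okrow (1,2,0,1,4)"
  unfolding okrow_def by code_simp
lemma okrow_16: "okrow (1,2,0,2,4)"
  unfolding okrow_def by code_simp
lemma okrow_17: "okrow (1,2,1,0,3)"
  unfolding okrow_def by code_simp
lemma okrow_18: "okrow (2,0,0,0,1)"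
  unfolding okrow_def by code_simp
lemma okrow_19: "okrow (2,0,1,0,3)"
  unfolding okrow_def by code_simp
lemma okrow_20: "okrow (2,0,1,2,4)"
  unfolding okrow_def by code_simp
lemma okrow_21: "okrow (2,0,2,0,3)"
  unfolding okrow_def by code_simp
lemma okrow_22: "okrow (2,0,2,1,4)"
  unfolding okrow_def by code_simp
lemma okrow_23: "okrow (2,1,0,0,2)"
  unfolding okrow_def by code_simp
lemma okrow_24: "okrow (2,1,0,1,4)"
  unfolding okrow_def by code_simp
lemma okrow_25: "okrow (2,1,2,1,4)"
  unfolding okrow_def by code_simp
lemma okrow_all: "list_all okrow SL"
  unfolding SL_def list_all_iff using okrow_0 okrow_1 okrow_2 okrow_3 okrow_4 okrow_5 okrow_6 okrow_7 okrow_8 okrow_9 okrow_10 okrow_11 okrow_12 okrow_13 okrow_14 okrow_15 okrow_16 okrow_17 okrow_18 okrow_19 okrow_20 okrow_21 okrow_22 okrow_23 okrow_24 okrow_25 by (simp only: list.set ball_simps)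
lemma okp_all: "list_all (\<lambda>x. list_all (okp x) SL) SL"
  using okrow_all unfolding okrow_def .

lemma core_ok:
  assumes "(a0, a1, a2, a3, ha) \<in> SS" "(b0, b1, b2, b3, hb) \<in> SS"
  shows "fst (core a0 a1 a2 a3 b0 b1 b2 b3) = snd (core a0 a1 a2 a3 b0 b1 b2 b3)"
proof -
  have "okp (a0, a1, a2, a3, ha) (b0, b1, b2, b3, hb)"
    using okp_all assms unfolding SS_def list_all_iff by blast
  then show ?thesis unfolding okp_def by simp
qed



definition inD :: "nat list \<Rightarrow> nat \<Rightarrow> nat \<Rightarrow> bool" where
  "inD l i j = (i < length l \<and> j < l ! i)"

definition G :: "nat list \<Rightarrow> nat \<Rightarrow> nat \<Rightarrow> nat" where
  "G l i j = sg (shift l i j)"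

lemma part_mono:
  assumes "is_partition l" "i \<le> k" "k < length l"
  shows "l ! k \<le> l ! i"
proof (cases "i = k")
  case False
  then show ?thesis using assms unfolding is_partition_def sorted_wrt_iff_nth_less by auto
qed simp

lemma inD_down:
  assumes "is_partition l" "inD l i j" "i' \<le> i" "j' \<le> j"
  shows "inD l i' j'"
  using assms part_mono[OF assms(1), of i' i] unfolding inD_def by auto

lemma shift_nil:
  assumes "is_partition l"
  shows "shift l i j = [] \<longleftrightarrow> \<not> inD l i j"
proof
  assume "shift l i j = []"
  then have A: "\<forall>x\<in>set (drop i l). x \<le> j" unfolding shift_def filter_empty_conv by auto
  show "\<not> inD l i j"
  proof
    assume "inD l i j"
    then have "l ! i \<in> set (drop i l)" unfolding inD_def
      by (metis Cons_nth_drop_Suc list.set_intros(1))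
    with A \<open>inD l i j\<close> show False unfolding inD_def by auto
  qed
next
  assume "\<not> inD l i j"
  have "\<forall>x\<in>set (drop i l). x \<le> j"
  proof
    fix x assume "x \<in> set (drop i l)"
    then obtain k where k: "k < length (drop i l)" "x = drop i l ! k" by (metis in_set_conv_nth)
    then have "x = l ! (i + k)" "i + k < length l" by auto
    then show "x \<le> j" using part_mono[OF assms, of i "i+k"] \<open>\<not> inD l i j\<close> unfolding inD_def by auto
  qed
  then show "shift l i j = []" unfolding shift_def filter_empty_conv by auto
qed

lemma drop1_filter:
  assumes "sorted_wrt (\<ge>) (xs :: nat list)"
  shows "drop 1 (filter (\<lambda>x. 0 < x) (map (\<lambda>x. x - j) xs)) = filter (\<lambda>x. 0 < x) (map (\<lambda>x. x - j) (drop 1 xs))"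
proof (cases xs)
  case (Cons x ys)
  show ?thesis
  proof (cases "j < x")
    case False
    then have "filter (\<lambda>x. 0 < x) (map (\<lambda>x. x - j) ys) = []"
      using assms Cons by (auto simp: filter_empty_conv)
    then show ?thesis using Cons False by simp
  qed (use Cons in simp)
qed simp

lemma shift_10:
  assumes "is_partition l"
  shows "shift (shift l i j) 1 0 = shift l (i + 1) j"
proof -
  have s: "sorted_wrt (\<ge>) (drop i l)" using assms unfolding is_partition_def
    by (simp add: sorted_wrt_drop)
  have "shift (shift l i j) 1 0 = filter (\<lambda>x. 0 < x) (drop 1 (filter (\<lambda>x. 0 < x) (map (\<lambda>x. x - j) (drop i l))))"
    unfolding shift_def by simp
  also have "\<dots> = drop 1 (filter (\<lambda>x. 0 < x) (map (\<lambda>x. x - j) (drop i l)))"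
    by (metis (mono_tags, lifting) filter_True in_set_dropD mem_Collect_eq set_filter)
  also have "\<dots> = shift l (i + 1) j" using drop1_filter[OF s, of j] unfolding shift_def by simp
  finally show ?thesis .
qed

lemma shift_01:
  "shift (shift l i j) 0 1 = shift l i (j + 1)"
proof -
  have "filter (\<lambda>x. 0 < x) (map (\<lambda>x. x - 1) (filter (\<lambda>x. 0 < x) (map (\<lambda>x. x - j) xs)))
        = filter (\<lambda>x. 0 < x) (map (\<lambda>x. x - (j + 1)) xs)" for xs :: "nat list"
    by (induction xs) auto
  then show ?thesis unfolding shift_def by simp
qed

lemma Grec:
  assumes "is_partition l"
  shows "G l i j = (if inD l i j then m2 (G l (i + 1) j) (G l i (j + 1)) else 0)"
  unfolding G_def
  using shift_10[OF assms, of i j] shift_01[of l i j]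
  by (subst sg.simps) (simp add: shift_nil[OF assms] mex2 mex0)

lemma G_out: "is_partition l \<Longrightarrow> \<not> inD l i j \<Longrightarrow> G l i j = 0"
  using Grec by simp

lemma G_in: "is_partition l \<Longrightarrow> inD l i j \<Longrightarrow> G l i j = m2 (G l (i + 1) j) (G l i (j + 1))"
  using Grec by simp

lemma SS_h: "(a, b, c, d, h) \<in> SS \<Longrightarrow> h \<le> 4"
  unfolding SS_def SL_def by auto

lemma SS0: "(0, 0, 0, 0, 0) \<in> SS"
  unfolding SS_def SL_def by simp


lemma col_state:
  assumes P: "is_partition l"
  shows "\<not> inD l (i + 4) m \<Longrightarrow> \<exists>h. (G l i m, G l (i + 1) m, G l (i + 2) m, G l (i + 3) m, h) \<in> SS
            \<and> (\<forall>k<4. inD l (i + k) m \<longleftrightarrow> k < h)"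
proof (induction "l ! i - m" arbitrary: m rule: less_induct)
  case less
  show ?case
  proof (cases "inD l i m")
    case False
    then have nk: "\<not> inD l (i + k) m" for k using inD_down[OF P, of "i+k" m i m] by auto
    have z: "G l (i + k) m = 0" for k using G_out[OF P nk] .
    show ?thesis using z[of 0] z[of 1] z[of 2] z[of 3] nk SS0 by (intro exI[of _ 0]) simp
  next
    case True
    have n1: "\<not> inD l (i + 4) (m + 1)" using less.prems inD_down[OF P, of "i+4" "m+1" "i+4" m] by auto
    have lt: "l ! i - (m + 1) < l ! i - m" using True unfolding inD_def by auto
    obtain h' where h': "(G l i (m + 1), G l (i + 1) (m + 1), G l (i + 2) (m + 1), G l (i + 3) (m + 1), h') \<in> SS"
      "\<forall>k<4. inD l (i + k) (m + 1) \<longleftrightarrow> k < h'"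
      using less.hyps[OF lt n1] by blast
    define r :: nat where "r = (if inD l (i+3) m then 4 else if inD l (i+2) m then 3 else if inD l (i+1) m then 2 else 1)"
    have d32: "inD l (i+3) m \<Longrightarrow> inD l (i+2) m" using inD_down[OF P, of "i+3" m "i+2" m] by auto
    have d21: "inD l (i+2) m \<Longrightarrow> inD l (i+1) m" using inD_down[OF P, of "i+2" m "i+1" m] by auto
    have rD: "inD l (i + k) m \<longleftrightarrow> k < r" if "k < 4" for k
    proof -
      have "k = 0 \<or> k = 1 \<or> k = 2 \<or> k = 3" using that by auto
      then show ?thesis using True d32 d21 unfolding r_def by auto
    qed
    have h4: "h' \<le> 4" using SS_h h'(1) by blast
    have hr: "h' \<le> r"
    proof (rule ccontr)
      assume "\<not> h' \<le> r"
      then have "r < 4" "r < h'" using h4 unfolding r_def by auto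
      then have "inD l (i + r) (m + 1)" using h'(2) by auto
      then have "inD l (i + r) m" using inD_down[OF P, of "i+r" "m+1" "i+r" m] by auto
      then show False using rD[of r] \<open>r < 4\<close> by auto
    qed
    have r14: "1 \<le> r" "r \<le> 4" unfolding r_def by auto
    have cl: "stepv (G l i (m + 1)) (G l (i + 1) (m + 1)) (G l (i + 2) (m + 1)) (G l (i + 3) (m + 1)) r \<in> SS"
      using SS_closed[OF h'(1) hr r14] .
    have g4: "G l (i + 4) m = 0" using G_out[OF P less.prems] .
    have add4: "i + 3 + 1 = i + 4" and add3: "i + 2 + 1 = i + 3" and add2: "i + 1 + 1 = i + 2" by simp_all
    have e3: "G l (i + 3) m = (if 3 < r then m2 0 (G l (i + 3) (m + 1)) else 0)"
      using Grec[OF P, of "i+3" m, unfolded add4] rD[of 3] g4 by simp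
    have e2: "G l (i + 2) m = (if 2 < r then m2 (G l (i + 3) m) (G l (i + 2) (m + 1)) else 0)"
      using Grec[OF P, of "i+2" m, unfolded add3] rD[of 2] by simp
    have e1: "G l (i + 1) m = (if 1 < r then m2 (G l (i + 2) m) (G l (i + 1) (m + 1)) else 0)"
      using Grec[OF P, of "i+1" m, unfolded add2] rD[of 1] by simp
    have e0: "G l i m = m2 (G l (i + 1) m) (G l i (m + 1))"
      using G_in[OF P True] .
    have "stepv (G l i (m + 1)) (G l (i + 1) (m + 1)) (G l (i + 2) (m + 1)) (G l (i + 3) (m + 1)) r
          = (G l i m, G l (i + 1) m, G l (i + 2) m, G l (i + 3) m, r)"
      using r14 by (simp only: stepv.simps Let_def e0 e1 e2 e3) simp
    then show ?thesis using cl rD by (intro exI[of _ r]) auto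
  qed
qed


lemma m2_comm: "m2 a b = m2 b a"
  unfolding m2_def by auto

lemma row_state:
  assumes P: "is_partition l"
  shows "\<not> inD l m (j + 4) \<Longrightarrow> \<exists>h. (G l m j, G l m (j + 1), G l m (j + 2), G l m (j + 3), h) \<in> SS
            \<and> (\<forall>k<4. inD l m (j + k) \<longleftrightarrow> k < h)"
proof (induction "length l - m" arbitrary: m rule: less_induct)
  case less
  show ?case
  proof (cases "inD l m j")
    case False
    then have nk: "\<not> inD l m (j + k)" for k using inD_down[OF P, of m "j+k" m j] by auto
    have z: "G l m (j + k) = 0" for k using G_out[OF P nk] .
    show ?thesis using z[of 0] z[of 1] z[of 2] z[of 3] nk SS0 by (intro exI[of _ 0]) simp
  next
    case True
    have n1: "\<not> inD l (m + 1) (j + 4)" using less.prems inD_down[OF P, of "m+1" "j+4" m "j+4"] by auto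
    have lt: "length l - (m + 1) < length l - m" using True unfolding inD_def by auto
    obtain h' where h': "(G l (m + 1) j, G l (m + 1) (j + 1), G l (m + 1) (j + 2), G l (m + 1) (j + 3), h') \<in> SS"
      "\<forall>k<4. inD l (m + 1) (j + k) \<longleftrightarrow> k < h'"
      using less.hyps[OF lt n1] by blast
    define r :: nat where "r = (if inD l m (j+3) then 4 else if inD l m (j+2) then 3 else if inD l m (j+1) then 2 else 1)"
    have d32: "inD l m (j+3) \<Longrightarrow> inD l m (j+2)" using inD_down[OF P, of m "j+3" m "j+2"] by auto
    have d21: "inD l m (j+2) \<Longrightarrow> inD l m (j+1)" using inD_down[OF P, of m "j+2" m "j+1"] by auto
    have rD: "inD l m (j + k) \<longleftrightarrow> k < r" if "k < 4" for k
    proof -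
      have "k = 0 \<or> k = 1 \<or> k = 2 \<or> k = 3" using that by auto
      then show ?thesis using True d32 d21 unfolding r_def by auto
    qed
    have h4: "h' \<le> 4" using SS_h h'(1) by blast
    have hr: "h' \<le> r"
    proof (rule ccontr)
      assume "\<not> h' \<le> r"
      then have "r < 4" "r < h'" using h4 unfolding r_def by auto
      then have "inD l (m + 1) (j + r)" using h'(2) by auto
      then have "inD l m (j + r)" using inD_down[OF P, of "m+1" "j+r" m "j+r"] by auto
      then show False using rD[of r] \<open>r < 4\<close> by auto
    qed
    have r14: "1 \<le> r" "r \<le> 4" unfolding r_def by auto
    have cl: "stepv (G l (m + 1) j) (G l (m + 1) (j + 1)) (G l (m + 1) (j + 2)) (G l (m + 1) (j + 3)) r \<in> SS"
      using SS_closed[OF h'(1) hr r14] .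
    have g4: "G l m (j + 4) = 0" using G_out[OF P less.prems] .
    have add4: "j + 3 + 1 = j + 4" and add3: "j + 2 + 1 = j + 3" and add2: "j + 1 + 1 = j + 2" by simp_all
    have e3: "G l m (j + 3) = (if 3 < r then m2 0 (G l (m + 1) (j + 3)) else 0)"
      using Grec[OF P, of m "j+3", unfolded add4] rD[of 3] g4 m2_comm by simp
    have e2: "G l m (j + 2) = (if 2 < r then m2 (G l m (j + 3)) (G l (m + 1) (j + 2)) else 0)"
      using Grec[OF P, of m "j+2", unfolded add3] rD[of 2] m2_comm by simp
    have e1: "G l m (j + 1) = (if 1 < r then m2 (G l m (j + 2)) (G l (m + 1) (j + 1)) else 0)"
      using Grec[OF P, of m "j+1", unfolded add2] rD[of 1] m2_comm by simp
    have e0: "G l m j = m2 (G l m (j + 1)) (G l (m + 1) j)"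
      using G_in[OF P True] m2_comm by simp
    have "stepv (G l (m + 1) j) (G l (m + 1) (j + 1)) (G l (m + 1) (j + 2)) (G l (m + 1) (j + 3)) r
          = (G l m j, G l m (j + 1), G l m (j + 2), G l m (j + 3), r)"
      using r14 by (simp only: stepv.simps Let_def e0 e1 e2 e3) simp
    then show ?thesis using cl rD by (intro exI[of _ r]) auto
  qed
qed


lemma diag:
  assumes P: "is_partition l"
  shows "inD l (i + 3) (j + 3) \<Longrightarrow> G l i j = G l (i + 1) (j + 1)"
proof (induction "length l + l ! 0 - (i + j)" arbitrary: i j rule: less_induct)
  case less
  have bnd: "i + j + 1 < length l + l ! 0"
    using less.prems part_mono[OF P, of 0 "i+3"] unfolding inD_def by auto
  have inij: "inD l i j" using inD_down[OF P less.prems] by auto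
  have in11: "inD l (i+1) (j+1)" using inD_down[OF P less.prems] by auto
  show ?case
  proof (cases "inD l (i + 4) (j + 4)")
    case True
    have a: "inD l (i + 1 + 3) (j + 3)" using inD_down[OF P True] by auto
    have b: "inD l (i + 3) (j + 1 + 3)" using inD_down[OF P True] by auto
    have ih1: "G l (i + 1) j = G l (i + 1 + 1) (j + 1)"
      using less.hyps[OF _ a] bnd by auto
    have ih2: "G l i (j + 1) = G l (i + 1) (j + 1 + 1)"
      using less.hyps[OF _ b] bnd by auto
    show ?thesis using G_in[OF P inij] G_in[OF P in11] ih1 ih2 by simp
  next
    case False
    obtain ha where ha: "(G l i (j + 4), G l (i + 1) (j + 4), G l (i + 2) (j + 4), G l (i + 3) (j + 4), ha) \<in> SS"
      using col_state[OF P False] by blast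
    obtain hb where hb: "(G l (i + 4) j, G l (i + 4) (j + 1), G l (i + 4) (j + 2), G l (i + 4) (j + 3), hb) \<in> SS"
      using row_state[OF P False] by blast
    define g where "g k m = G l (i + k) (j + m)" for k m
    have e: "g k m = m2 (g (k + 1) m) (g k (m + 1))" if "k < 4" "m < 4" for k m
    proof -
      have "inD l (i + k) (j + m)" using inD_down[OF P less.prems] that by auto
      then show ?thesis unfolding g_def using G_in[OF P] by (simp add: add.assoc)
    qed
    have E00: "g 0 0 = m2 (g 1 0) (g 0 1)" using e[of 0 0] by (simp add: eval_nat_numeral)
    have E01: "g 0 1 = m2 (g 1 1) (g 0 2)" using e[of 0 1] by (simp add: eval_nat_numeral)
    have E02: "g 0 2 = m2 (g 1 2) (g 0 3)" using e[of 0 2] by (simp add: eval_nat_numeral)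
    have E03: "g 0 3 = m2 (g 1 3) (g 0 4)" using e[of 0 3] by (simp add: eval_nat_numeral)
    have E10: "g 1 0 = m2 (g 2 0) (g 1 1)" using e[of 1 0] by (simp add: eval_nat_numeral)
    have E11: "g 1 1 = m2 (g 2 1) (g 1 2)" using e[of 1 1] by (simp add: eval_nat_numeral)
    have E12: "g 1 2 = m2 (g 2 2) (g 1 3)" using e[of 1 2] by (simp add: eval_nat_numeral)
    have E13: "g 1 3 = m2 (g 2 3) (g 1 4)" using e[of 1 3] by (simp add: eval_nat_numeral)
    have E20: "g 2 0 = m2 (g 3 0) (g 2 1)" using e[of 2 0] by (simp add: eval_nat_numeral)
    have E21: "g 2 1 = m2 (g 3 1) (g 2 2)" using e[of 2 1] by (simp add: eval_nat_numeral)
    have E22: "g 2 2 = m2 (g 3 2) (g 2 3)" using e[of 2 2] by (simp add: eval_nat_numeral)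
    have E23: "g 2 3 = m2 (g 3 3) (g 2 4)" using e[of 2 3] by (simp add: eval_nat_numeral)
    have E30: "g 3 0 = m2 (g 4 0) (g 3 1)" using e[of 3 0] by (simp add: eval_nat_numeral)
    have E31: "g 3 1 = m2 (g 4 1) (g 3 2)" using e[of 3 1] by (simp add: eval_nat_numeral)
    have E32: "g 3 2 = m2 (g 4 2) (g 3 3)" using e[of 3 2] by (simp add: eval_nat_numeral)
    have E33: "g 3 3 = m2 (g 4 3) (g 3 4)" using e[of 3 3] by (simp add: eval_nat_numeral)
    have ha': "(g 0 4, g 1 4, g 2 4, g 3 4, ha) \<in> SS" using ha unfolding g_def by simp
    have hb': "(g 4 0, g 4 1, g 4 2, g 4 3, hb) \<in> SS" using hb unfolding g_def by simp
    have c: "fst (core (g 0 4) (g 1 4) (g 2 4) (g 3 4) (g 4 0) (g 4 1) (g 4 2) (g 4 3))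
           = snd (core (g 0 4) (g 1 4) (g 2 4) (g 3 4) (g 4 0) (g 4 1) (g 4 2) (g 4 3))"
      using core_ok[OF ha' hb'] .
    have "g 0 0 = g 1 1" using c by (simp only: core.simps rowf.simps fst_conv snd_conv E00 E01 E02 E03 E10 E11 E12 E13 E20 E21 E22 E23 E30 E31 E32 E33)
    then show ?thesis unfolding g_def by simp
  qed
qed


lemma chain:
  assumes P: "is_partition l"
  shows "inD l (n + 2) (n + 2) \<Longrightarrow> G l 0 0 = G l n n"
proof (induction n)
  case (Suc n)
  have a: "inD l (n + 2) (n + 2)" using inD_down[OF P Suc.prems] by auto
  have b: "inD l (n + 3) (n + 3)" using Suc.prems by (simp add: eval_nat_numeral)
  show ?case using Suc.IH[OF a] diag[OF P b] by simp
qed simp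

lemma G00: "is_partition l \<Longrightarrow> G l 0 0 = sg l"
proof -
  assume "is_partition l"
  then have "filter (\<lambda>x. 0 < x) l = l" unfolding is_partition_def by (simp add: filter_id_conv)
  then show ?thesis unfolding G_def shift_def by simp
qed

lemma durfee_in:
  assumes "durfee l \<ge> 1"
  shows "inD l (durfee l - 1) (durfee l - 1)"
proof -
  let ?A = "{0} \<union> {k. 1 \<le> k \<and> k \<le> length l \<and> k \<le> l ! (k - 1)}"
  have "finite ?A" by (rule finite_subset[of _ "{0..length l}"]) auto
  then have "Max ?A \<in> ?A" by (intro Max_in) auto
  then have "durfee l \<in> ?A" unfolding durfee_def .
  then show ?thesis using assms unfolding inD_def by auto
qed

theorem mainTheorem11:
  fixes lam :: "nat list"
  assumes "is_partition lam" and "durfee lam \<ge> 3"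
  shows "sg lam = sg (shift lam (durfee lam - 3) (durfee lam - 3))"
proof -
  have "inD lam (durfee lam - 1) (durfee lam - 1)" using durfee_in assms(2) by auto
  moreover have "durfee lam - 1 = (durfee lam - 3) + 2" using assms(2) by auto
  ultimately have "G lam 0 0 = G lam (durfee lam - 3) (durfee lam - 3)"
    using chain[OF assms(1)] by metis
  then show ?thesis using G00[OF assms(1)] unfolding G_def by simp
qed

end
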